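(* Let $n \ge q \ge 1$ be integers and let $r = \lceil n/q \rceil$. Then the optimal competitive ratio of the parallelized greedy algorithm with $n$ agents and at most $q$ iterations is \[ \rho(n,q) = \begin{cases} \frac{1}{r} & \text{if } n \equiv 1 \pmod q,\\ \frac{1}{r+1} & \text{otherwise.}\end{cases} \] Moreover, this value is attained by the following iteration assignment $P^*_{n,q}$: if $n \equiv 1 \pmod q$, then $P^*_{n,q}(i) = \lceil i/(r-1) \rceil$ for $i<n$ and $P^*_{n,q}(n) = q$; otherwise, $P^*_{n,q}(i) = \lceil i/r \rceil$ for all $i \in [n]$.
   Context: A set function $f: 2^S \to \mathbb{R}_{\ge 0}$ on a finite base set $S$ is normalized if $f(\emptyset)=0$, monotone if $f(\{e\}\mid A)\ge 0$ for all $e\in S$, $A\subseteq S$, and submodular if $f(\{e\}\mid A) \ge f(\{e\}\mid B)$ for all $A\subseteq B\subseteq S$ and $e\in S\setminus B$, where $f(A\mid B) = f(A\cup B)-f(B)$. Let $\mathcal{F}$ be the set of normalized, monotone, submodular functions. There are $n$ agents $N=[n]=\{1,\dots,n\}$; agent $i$ has a decision set $X_i\subseteq S$, with $X_1,\dots,X_n$ a partition of $S$. An action profile is $x=(x_1,\dots,x_n)\in X = X_1\times\cdots\times X_n$, valued as $f(x) = f(\{x_1,\dots,x_n\})$; for $M\subseteq N$, $x_M$ denotes $\{x_i : i\in M\}$. Let $x^{\mathrm{opt}}\in\arg\max_{x\in X} f(x)$. An iteration assignment is a function $P:[n]\to[q]$ with $P(i)\le P(j)$ whenever $i<j$; $\mathcal{P}_{n,q}$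 denotes the set of such assignments. The parallelized greedy algorithm with assignment $P$ produces $x^{\mathrm{sol}}$ with $x^{\mathrm{sol}}_i \in \arg\max_{x_i\in X_i} f(x_i \mid x^{\mathrm{sol}}_{\mathcal{N}_i})$, where $\mathcal{N}_i = \{j : P(j) < P(i)\}$; when several greedy outcomes are possible, $x^{\mathrm{sol}}$ is taken to be the worst one (smallest $f$-value). Define $\gamma(f,X,P) = f(x^{\mathrm{sol}})/f(x^{\mathrm{opt}})$, $\gamma(P) = \inf_{f\in\mathcal{F},X}\gamma(f,X,P)$ (infimum over all finite $S$, all such $f$ and all decision sets), and $\rho(n,q) = \sup_{P\in\mathcal{P}_{n,q}}\gamma(P)$. *)

theory Defs
  imports "HOL-Library.FuncSet" Complex_Main
begin

text \<open>Base sets S are finite subsets of nat (every finite base set is isomorphic to one).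
Agents are 1..n; an action profile is an extensional function on {1..n}.\<close>

definition marg :: "(nat set \<Rightarrow> real) \<Rightarrow> nat set \<Rightarrow> nat set \<Rightarrow> real" where
  "marg f A B = f (A \<union> B) - f B"

definition normalized :: "(nat set \<Rightarrow> real) \<Rightarrow> bool" where
  "normalized f \<longleftrightarrow> f {} = 0"

definition monotone_sf :: "nat set \<Rightarrow> (nat set \<Rightarrow> real) \<Rightarrow> bool" where
  "monotone_sf S f \<longleftrightarrow> (\<forall>e\<in>S. \<forall>A. A \<subseteq> S \<longrightarrow> marg f {e} A \<ge> 0)"

definition submodular_sf :: "nat set \<Rightarrow> (nat set \<Rightarrow> real) \<Rightarrow> bool" where
  "submodular_sf S f \<longleftrightarrow>
     (\<forall>A B e. A \<subseteq> B \<and> B \<subseteq> S \<and> e \<in> S - B \<longrightarrow> marg f {e} A \<ge> marg f {e} B)"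

definition in_F :: "nat set \<Rightarrow> (nat set \<Rightarrow> real) \<Rightarrow> bool" where
  "in_F S f \<longleftrightarrow> (\<forall>A. A \<subseteq> S \<longrightarrow> f A \<ge> 0) \<and> normalized f \<and> monotone_sf S f \<and> submodular_sf S f"

definition decision_sets :: "nat \<Rightarrow> nat set \<Rightarrow> (nat \<Rightarrow> nat set) \<Rightarrow> bool" where
  "decision_sets n S X \<longleftrightarrow>
     (\<forall>i\<in>{1..n}. X i \<noteq> {}) \<and>
     (\<forall>i\<in>{1..n}. \<forall>j\<in>{1..n}. i \<noteq> j \<longrightarrow> X i \<inter> X j = {}) \<and>
     (\<Union>i\<in>{1..n}. X i) = S"

definition profiles :: "nat \<Rightarrow> (nat \<Rightarrow> nat set) \<Rightarrow> (nat \<Rightarrow> nat) set" where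
  "profiles n X = Pi\<^sub>E {1..n} X"

definition val :: "(nat set \<Rightarrow> real) \<Rightarrow> nat \<Rightarrow> (nat \<Rightarrow> nat) \<Rightarrow> real" where
  "val f n x = f (x ` {1..n})"

definition opt_val :: "(nat set \<Rightarrow> real) \<Rightarrow> nat \<Rightarrow> (nat \<Rightarrow> nat set) \<Rightarrow> real" where
  "opt_val f n X = Max (val f n ` profiles n X)"

definition assignments :: "nat \<Rightarrow> nat \<Rightarrow> (nat \<Rightarrow> nat) set" where
  "assignments n q = {P. (\<forall>i\<in>{1..n}. P i \<in> {1..q}) \<and>
                         (\<forall>i\<in>{1..n}. \<forall>j\<in>{1..n}. i < j \<longrightarrow> P i \<le> P j)}"

definition pred_agents :: "nat \<Rightarrow> (nat \<Rightarrow> nat) \<Rightarrow> nat \<Rightarrow> nat set" where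
  "pred_agents n P i = {j\<in>{1..n}. P j < P i}"

definition greedy_outcome :: "(nat set \<Rightarrow> real) \<Rightarrow> nat \<Rightarrow> (nat \<Rightarrow> nat set) \<Rightarrow> (nat \<Rightarrow> nat) \<Rightarrow> (nat \<Rightarrow> nat) \<Rightarrow> bool" where
  "greedy_outcome f n X P x \<longleftrightarrow> x \<in> profiles n X \<and>
     (\<forall>i\<in>{1..n}. \<forall>y\<in>X i.
        marg f {y} (x ` pred_agents n P i) \<le> marg f {x i} (x ` pred_agents n P i))"

definition gamma_inst :: "(nat set \<Rightarrow> real) \<Rightarrow> nat \<Rightarrow> (nat \<Rightarrow> nat set) \<Rightarrow> (nat \<Rightarrow> nat) \<Rightarrow> real" where
  "gamma_inst f n X P = Inf {val f n x / opt_val f n X | x. greedy_outcome f n X P x}"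

definition gamma :: "nat \<Rightarrow> (nat \<Rightarrow> nat) \<Rightarrow> real" where
  "gamma n P = Inf {gamma_inst f n X P | S f X.
       finite S \<and> in_F S f \<and> decision_sets n S X \<and> opt_val f n X > 0}"

definition rho :: "nat \<Rightarrow> nat \<Rightarrow> real" where
  "rho n q = Sup (gamma n ` assignments n q)"

definition Pstar :: "nat \<Rightarrow> nat \<Rightarrow> nat \<Rightarrow> nat" where
  "Pstar n q i = (let r = nat \<lceil>real n / real q\<rceil> in
      if n mod q = 1 mod q then (if i < n then nat \<lceil>real i / real (r - 1)\<rceil> else q)
      else nat \<lceil>real i / real r\<rceil>)"

end

theory Submission
  imports Defs
begin


lemma F_mono_set:
  assumes F: "in_F S f" and AB: "A \<subseteq> B" and BS: "B \<subseteq> S" and fin: "finite S"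
  shows "f A \<le> f B"
proof -
  have "finite D \<Longrightarrow> D \<subseteq> S \<Longrightarrow> f A \<le> f (A \<union> D)" for D
  proof (induction D rule: finite_induct)
    case empty then show ?case by simp
  next
    case (insert d D)
    have "A \<union> D \<subseteq> S" using AB BS insert by auto
    then have "marg f {d} (A \<union> D) \<ge> 0" using F insert unfolding in_F_def monotone_sf_def by auto
    then have "f (A \<union> D) \<le> f ({d} \<union> (A \<union> D))" unfolding marg_def by simp
    moreover have "{d} \<union> (A \<union> D) = A \<union> insert d D" by auto
    ultimately show ?case using insert by simp
  qed
  moreover have "finite (B - A)" using fin BS by (meson finite_Diff finite_subset)
  ultimately have "f A \<le> f (A \<union> (B - A))" using BS by blast
  moreover have "A \<union> (B - A) = B" using AB by auto
  ultimately show ?thesis by simp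
qed

lemma marg_nonneg:
  assumes F: "in_F S f" and "e \<in> S" "A \<subseteq> S"
  shows "marg f {e} A \<ge> 0"
  using assms unfolding in_F_def monotone_sf_def by auto

lemma marg_anti:
  assumes F: "in_F S f" and AB: "A \<subseteq> B" and BS: "B \<subseteq> S" and e: "e \<in> S"
  shows "marg f {e} B \<le> marg f {e} A"
proof (cases "e \<in> B")
  case True
  then have "marg f {e} B = 0" unfolding marg_def by (simp add: insert_absorb)
  moreover have "marg f {e} A \<ge> 0" using marg_nonneg[OF F e] AB BS by auto
  ultimately show ?thesis by simp
next
  case False
  then show ?thesis using F AB BS e unfolding in_F_def submodular_sf_def by blast
qed

lemma union_bound:
  assumes F: "in_F S f" and fin: "finite S" and AS: "A \<subseteq> S" and ES: "E \<subseteq> S"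
  shows "f (A \<union> E) \<le> f A + (\<Sum>e\<in>E. marg f {e} A)"
proof -
  have "finite E" using fin ES finite_subset by blast
  then show ?thesis using ES
  proof (induction E rule: finite_induct)
    case empty then show ?case by simp
  next
    case (insert e E)
    have "marg f {e} (A \<union> E) \<le> marg f {e} A"
      using marg_anti[OF F, of A "A \<union> E" e] AS insert by auto
    moreover have "f (A \<union> insert e E) = f (A \<union> E) + marg f {e} (A \<union> E)"
      unfolding marg_def by (simp add: Un_commute Un_left_commute)
    ultimately show ?case using insert by simp
  qed
qed

lemma pred_lt:
  assumes mono: "\<forall>i\<in>{1..n}. \<forall>j\<in>{1..n}. i < j \<longrightarrow> P i \<le> P j"
    and "j \<in> pred_agents n P i" "i \<in> {1..n}"
  shows "j < i"
  using assms unfolding pred_agents_def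
  by (metis (no_types, lifting) leD linorder_neqE_nat mem_Collect_eq order_less_irrefl)

lemma greedy_exists:
  assumes mono: "\<forall>i\<in>{1..n}. \<forall>j\<in>{1..n}. i < j \<longrightarrow> P i \<le> P j"
    and fin: "finite S" and D: "decision_sets n S X"
  shows "\<exists>x. greedy_outcome f n X P x"
proof -
  have ne: "\<forall>i\<in>{1..n}. X i \<noteq> {}" and XS: "\<forall>i\<in>{1..n}. X i \<subseteq> S"
    using D unfolding decision_sets_def by auto
  have "k \<le> n \<Longrightarrow> \<exists>x\<in>profiles n X. \<forall>i\<in>{1..k}. \<forall>y\<in>X i.
        marg f {y} (x ` pred_agents n P i) \<le> marg f {x i} (x ` pred_agents n P i)" for k
  proof (induction k)
    case 0
    have "profiles n X \<noteq> {}" unfolding profiles_def using ne by (simp add: PiE_eq_empty_iff)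
    then show ?case by auto
  next
    case (Suc k)
    then obtain x where x: "x \<in> profiles n X" and
      xg: "\<forall>i\<in>{1..k}. \<forall>y\<in>X i. marg f {y} (x ` pred_agents n P i) \<le> marg f {x i} (x ` pred_agents n P i)"
      by auto
    define A where "A = x ` pred_agents n P (Suc k)"
    define g where "g = (\<lambda>y. marg f {y} A)"
    have k1: "Suc k \<in> {1..n}" using Suc by auto
    have finX: "finite (X (Suc k))" using XS k1 fin finite_subset by blast
    have neX: "X (Suc k) \<noteq> {}" using ne k1 by auto
    obtain z where z: "z \<in> X (Suc k)" "g z = Max (g ` X (Suc k))"
      using Max_in[of "g ` X (Suc k)"] finX neX by (metis (no_types, lifting) empty_is_image finite_imageI imageE)
    have zmax: "\<forall>y\<in>X (Suc k). g y \<le> g z" using z finX by simp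
    define x' where "x' = x(Suc k := z)"
    have x': "x' \<in> profiles n X" using x z k1 unfolding profiles_def x'_def
      by (auto simp: PiE_iff extensional_def)
    have pk: "\<And>i. i \<in> {1..k} \<Longrightarrow> Suc k \<notin> pred_agents n P i"
    proof
      fix i assume i: "i \<in> {1..k}" and "Suc k \<in> pred_agents n P i"
      then have "Suc k < i" using pred_lt[OF mono] Suc.prems by auto
      then show False using i by auto
    qed
    have same: "\<And>i. i \<in> {1..k} \<Longrightarrow> x' ` pred_agents n P i = x ` pred_agents n P i"
      unfolding x'_def using pk by (auto simp: image_def)
    have same2: "x' ` pred_agents n P (Suc k) = A"
      unfolding x'_def A_def using pred_lt[OF mono _ k1] by (auto simp: image_def)
    have "\<forall>i\<in>{1..Suc k}. \<forall>y\<in>X i.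
        marg f {y} (x' ` pred_agents n P i) \<le> marg f {x' i} (x' ` pred_agents n P i)"
    proof (intro ballI)
      fix i y assume i: "i \<in> {1..Suc k}" and y: "y \<in> X i"
      show "marg f {y} (x' ` pred_agents n P i) \<le> marg f {x' i} (x' ` pred_agents n P i)"
      proof (cases "i = Suc k")
        case True
        then show ?thesis using same2 zmax y unfolding g_def x'_def by simp
      next
        case False
        then have "i \<in> {1..k}" using i by auto
        then show ?thesis using same xg y False unfolding x'_def by auto
      qed
    qed
    then show ?case using x' by blast
  qed
  from this[of n] show ?thesis unfolding greedy_outcome_def by auto
qed


lemma telescope1:
  fixes F :: "nat \<Rightarrow> real"
  shows "(\<Sum>k\<in>{1..L}. F k - F (k - 1)) = F L - F 0"
  by (induction L) (simp_all add: sum.cl_ivl_Suc)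

lemma lower_bound:
  fixes P :: "nat \<Rightarrow> nat" and D :: nat
  assumes mono: "\<forall>i\<in>{1..n}. \<forall>j\<in>{1..n}. i < j \<longrightarrow> P i \<le> P j"
    and pos: "\<forall>i\<in>{1..n}. 1 \<le> P i"
    and n1: "1 \<le> n"
    and Dk: "\<forall>k. 1 \<le> k \<longrightarrow> k < P n \<longrightarrow> card {i\<in>{1..n}. P i = k} + 1 \<le> D"
    and DL: "card {i\<in>{1..n}. P i = P n} \<le> D"
    and F: "in_F S f" and fin: "finite S" and dec: "decision_sets n S X"
    and g: "greedy_outcome f n X P x"
  shows "opt_val f n X \<le> real D * val f n x"
proof -
  have XS: "\<forall>i\<in>{1..n}. X i \<subseteq> S" and ne: "\<forall>i\<in>{1..n}. X i \<noteq> {}"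
    using dec unfolding decision_sets_def by auto
  have xP: "x \<in> profiles n X" and xg: "\<forall>i\<in>{1..n}. \<forall>y\<in>X i.
        marg f {y} (x ` pred_agents n P i) \<le> marg f {x i} (x ` pred_agents n P i)"
    using g unfolding greedy_outcome_def by auto
  have xS: "\<And>A. A \<subseteq> {1..n} \<Longrightarrow> x ` A \<subseteq> S"
    using xP XS unfolding profiles_def by (auto simp: PiE_iff)
  have finprof: "finite (profiles n X)" unfolding profiles_def
    using XS fin by (intro finite_PiE) (simp, meson finite_subset)
  have neprof: "profiles n X \<noteq> {}" unfolding profiles_def using ne by (simp add: PiE_eq_empty_iff)
  obtain w where oP: "w \<in> profiles n X" and oopt: "opt_val f n X = val f n w"
    unfolding opt_val_def using Max_in[of "val f n ` profiles n X"] finprof neprof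
    by (metis (no_types, lifting) empty_is_image finite_imageI imageE)
  have oS: "\<And>i. i \<in> {1..n} \<Longrightarrow> w i \<in> X i"
    using oP unfolding profiles_def by (auto simp: PiE_iff)
  have oSS: "w ` {1..n} \<subseteq> S" using oS XS by (meson atLeastAtMost_iff image_subsetI subsetD)
  define L where "L = P n"
  have Ple: "\<forall>i\<in>{1..n}. P i \<le> L" unfolding L_def using mono n1
    by (metis atLeastAtMost_iff le_eq_less_or_eq order_refl)
  have L1: "1 \<le> L" unfolding L_def using pos n1 by auto
  define Fk where "Fk k = f (x ` {i\<in>{1..n}. P i \<le> k})" for k
  have predeq: "\<And>i. i \<in> {1..n} \<Longrightarrow> pred_agents n P i = {j\<in>{1..n}. P j \<le> P i - 1}"
    unfolding pred_agents_def using pos by force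
  define T where "T = {i\<in>{1..n}. P i \<le> L - 1}"
  have TS: "x ` T \<subseteq> S" unfolding T_def by (intro xS) auto
  have Fk_mono: "\<And>a b. a \<le> b \<Longrightarrow> Fk a \<le> Fk b"
    unfolding Fk_def by (rule F_mono_set[OF F _ _ fin]) (auto intro!: xS)
  have s1: "val f n w \<le> Fk (L - 1) + (\<Sum>i\<in>{1..n}. marg f {w i} (x ` T))"
  proof -
    have "val f n w \<le> f (x ` T \<union> w ` {1..n})"
      unfolding val_def by (rule F_mono_set[OF F _ _ fin]) (use TS oSS in auto)
    also have "\<dots> \<le> f (x ` T) + (\<Sum>e\<in>w ` {1..n}. marg f {e} (x ` T))"
      by (rule union_bound[OF F fin TS oSS])
    also have "(\<Sum>e\<in>w ` {1..n}. marg f {e} (x ` T)) \<le> (\<Sum>i\<in>{1..n}. marg f {w i} (x ` T))"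
      using sum_image_le[of "{1..n}" "\<lambda>e. marg f {e} (x ` T)" w] marg_nonneg[OF F _ TS] oSS
      by (simp add: o_def image_subset_iff)
    finally show ?thesis unfolding Fk_def T_def by simp
  qed
  have s2: "marg f {w i} (x ` T) \<le> Fk (P i) - Fk (P i - 1)" if i: "i \<in> {1..n}" for i
  proof -
    have a: "marg f {w i} (x ` T) \<le> marg f {w i} (x ` pred_agents n P i)"
    proof (cases "P i = L")
      case True
      then show ?thesis using predeq[OF i] unfolding T_def by simp
    next
      case False
      moreover have "P i \<le> L" using Ple i by auto
      ultimately have "pred_agents n P i \<subseteq> T" using predeq[OF i] unfolding T_def by auto
      then show ?thesis using marg_anti[OF F _ TS] oSS i by (meson image_mono imageI subsetD)
    qed
    have b: "marg f {w i} (x ` pred_agents n P i) \<le> marg f {x i} (x ` pred_agents n P i)"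
      using xg oS i by auto
    have "f ({x i} \<union> x ` pred_agents n P i) \<le> Fk (P i)"
      unfolding Fk_def using i predeq[OF i]
      by (intro F_mono_set[OF F _ _ fin]) (auto intro!: xS)
    then have c: "marg f {x i} (x ` pred_agents n P i) \<le> Fk (P i) - Fk (P i - 1)"
      unfolding marg_def Fk_def using predeq[OF i] by simp
    show ?thesis using a b c by linarith
  qed
  have s3: "(\<Sum>i\<in>{1..n}. Fk (P i) - Fk (P i - 1))
      = (\<Sum>k\<in>{1..L}. real (card {i\<in>{1..n}. P i = k}) * (Fk k - Fk (k - 1)))"
  proof -
    have "(\<Sum>i\<in>{1..n}. Fk (P i) - Fk (P i - 1))
        = (\<Sum>k\<in>{1..L}. \<Sum>i\<in>{i\<in>{1..n}. P i = k}. Fk (P i) - Fk (P i - 1))"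
      using Ple pos by (intro sum.group[symmetric]) auto
    also have "\<dots> = (\<Sum>k\<in>{1..L}. real (card {i\<in>{1..n}. P i = k}) * (Fk k - Fk (k - 1)))"
      by (intro sum.cong refl) simp
    finally show ?thesis .
  qed
  have s4: "real (card {i\<in>{1..n}. P i = k}) * (Fk k - Fk (k - 1))
      \<le> (real D - 1) * (Fk k - Fk (k - 1)) + (if k = L then Fk k - Fk (k - 1) else 0)"
    if k: "k \<in> {1..L}" for k
  proof -
    have d: "Fk k - Fk (k - 1) \<ge> 0" using Fk_mono[of "k - 1" k] by simp
    have "real (card {i\<in>{1..n}. P i = k}) \<le> real D - 1 + (if k = L then 1 else 0)"
    proof (cases "k = L")
      case True then show ?thesis using DL unfolding L_def by simp
    next
      case False
      then have "card {i\<in>{1..n}. P i = k} + 1 \<le> D" using Dk k unfolding L_def by auto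
      then show ?thesis using False by simp
    qed
    then have "real (card {i\<in>{1..n}. P i = k}) * (Fk k - Fk (k - 1))
        \<le> (real D - 1 + (if k = L then 1 else 0)) * (Fk k - Fk (k - 1))"
      using d mult_right_mono by blast
    then show ?thesis by (cases "k = L") (simp_all add: algebra_simps)
  qed
  have s5: "(\<Sum>k\<in>{1..L}. (real D - 1) * (Fk k - Fk (k - 1)) + (if k = L then Fk k - Fk (k - 1) else 0))
      = (real D - 1) * (Fk L - Fk 0) + (Fk L - Fk (L - 1))"
    using L1 telescope1[of Fk L] by (simp add: sum.distrib sum_distrib_left[symmetric])
  have F0: "Fk 0 = 0"
  proof -
    have "{i\<in>{1..n}. P i \<le> 0} = {}" using pos by force
    then have "x ` {i\<in>{1..n}. P i \<le> 0} = {}" by simp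
    then show ?thesis unfolding Fk_def using F unfolding in_F_def normalized_def by metis
  qed
  have FL: "Fk L = val f n x"
  proof -
    have "{i\<in>{1..n}. P i \<le> L} = {1..n}" using Ple by auto
    then show ?thesis unfolding Fk_def val_def by simp
  qed
  have "(\<Sum>i\<in>{1..n}. marg f {w i} (x ` T)) \<le> (\<Sum>i\<in>{1..n}. Fk (P i) - Fk (P i - 1))"
    using s2 by (intro sum_mono) auto
  also have "\<dots> \<le> (\<Sum>k\<in>{1..L}. (real D - 1) * (Fk k - Fk (k - 1)) + (if k = L then Fk k - Fk (k - 1) else 0))"
    unfolding s3 using s4 by (intro sum_mono) auto
  finally have "val f n w \<le> Fk (L - 1) + ((real D - 1) * (Fk L - Fk 0) + (Fk L - Fk (L - 1)))"
    using s1 s5 by linarith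
  then show ?thesis using oopt F0 FL by (simp add: algebra_simps)
qed


definition fUB :: "nat set \<Rightarrow> nat set \<Rightarrow> nat set \<Rightarrow> real" where
  "fUB U B A = (if A \<inter> U = {} then 0 else 1) + real (card (A \<inter> B))"

lemma marg_fUB:
  assumes "finite B"
  shows "marg (fUB U B) {e} A = (if e \<in> A then 0 else
     (if e \<in> U \<and> A \<inter> U = {} then 1 else 0) + (if e \<in> B then 1 else 0))"
proof (cases "e \<in> A")
  case True
  then show ?thesis unfolding marg_def by (simp add: insert_absorb)
next
  case eA: False
  have c: "card (({e} \<union> A) \<inter> B) = card (A \<inter> B) + (if e \<in> B then 1 else 0)"
  proof (cases "e \<in> B")
    case True
    then have "({e} \<union> A) \<inter> B = insert e (A \<inter> B)" by auto
    then show ?thesis using eA True assms by simp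
  next
    case False
    then have "({e} \<union> A) \<inter> B = A \<inter> B" by auto
    then show ?thesis using False by simp
  qed
  have u: "(({e} \<union> A) \<inter> U = {}) = (e \<notin> U \<and> A \<inter> U = {})" by auto
  show ?thesis using eA unfolding marg_def fUB_def c u by auto
qed

lemma marg_fUB_nonneg: "finite B \<Longrightarrow> marg (fUB U B) {e} A \<ge> 0"
  by (simp add: marg_fUB)

lemma inF_fUB:
  assumes "finite B"
  shows "in_F S (fUB U B)"
  unfolding in_F_def normalized_def monotone_sf_def submodular_sf_def
proof (intro conjI allI impI ballI)
  fix A show "0 \<le> fUB U B A" unfolding fUB_def by simp
next
  show "fUB U B {} = 0" unfolding fUB_def by simp
next
  fix e A show "0 \<le> marg (fUB U B) {e} A" using marg_fUB_nonneg[OF assms] .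
next
  fix A C e assume h: "A \<subseteq> C \<and> C \<subseteq> S \<and> e \<in> S - C"
  then have "e \<notin> A" "e \<notin> C" by auto
  moreover have "C \<inter> U = {} \<Longrightarrow> A \<inter> U = {}" using h by auto
  ultimately show "marg (fUB U B) {e} C \<le> marg (fUB U B) {e} A"
    unfolding marg_fUB[OF assms] by auto
qed

lemma ev_img[simp]: "(2 * (i::nat) \<in> (\<lambda>j. 2 * j) ` A) = (i \<in> A)" by auto
lemma od_img[simp]: "(2 * (i::nat) + 1 \<in> (\<lambda>j. 2 * j + 1) ` A) = (i \<in> A)" by auto
lemma ev_od_img[simp]: "2 * (i::nat) \<notin> (\<lambda>j. 2 * j + 1) ` A" by (auto, presburger)
lemma od_ev_img[simp]: "2 * (i::nat) + 1 \<notin> (\<lambda>j. 2 * j) ` A" by (auto, presburger)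

lemma group_instance:
  fixes P :: "nat \<Rightarrow> nat" and p :: nat
  assumes p: "p \<in> P ` {1..n}"
  defines "G \<equiv> {i\<in>{1..n}. P i = p}" and "J \<equiv> {i\<in>{1..n}. p < P i}"
  shows "\<exists>S f X x. finite S \<and> in_F S f \<and> decision_sets n S X \<and> opt_val f n X > 0 \<and>
      greedy_outcome f n X P x \<and>
      val f n x / opt_val f n X \<le> 1 / (real (card G) + (if J = {} then 0 else 1))"
proof -
  define X where "X i = (if P i < p then {2*i} else {2*i, 2*i+1})" for i
  define U where "U = (\<lambda>i. 2*i) ` {i\<in>{1..n}. p \<le> P i}"
  define B where "B = (\<lambda>i. 2*i+1) ` G"
  define f where "f = fUB U B"
  define S where "S = (\<Union>i\<in>{1..n}. X i)"
  have finB: "finite B" unfolding B_def G_def by simp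
  have finS: "finite S" unfolding S_def X_def by simp
  have F: "in_F S f" unfolding f_def by (rule inF_fUB[OF finB])
  have dec: "decision_sets n S X" unfolding decision_sets_def S_def
  proof (intro conjI ballI impI)
    fix i j :: nat assume "i \<noteq> j"
    then show "X i \<inter> X j = {}" unfolding X_def by auto
  qed (auto simp: X_def)
  have finprof: "finite (profiles n X)" unfolding profiles_def X_def
    by (intro finite_PiE) auto
  define x where "x i = (if i \<in> {1..n} then 2*i else undefined)" for i :: nat
  define y where "y i = (if i \<in> {1..n} then (if P i = p then 2*i+1 else 2*i) else undefined)" for i :: nat
  have xP: "x \<in> profiles n X" unfolding profiles_def x_def X_def
    by (auto simp: PiE_iff extensional_def)
  have yP: "y \<in> profiles n X" unfolding profiles_def y_def X_def
    by (auto simp: PiE_iff extensional_def)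
  have ximg: "x ` A = (\<lambda>j. 2*j) ` A" if "A \<subseteq> {1..n}" for A
    using that unfolding x_def by (auto simp: image_def)
  have Gne: "G \<noteq> {}" using p unfolding G_def by auto
  have cG: "card G \<ge> 1" using Gne unfolding G_def by (simp add: Suc_leI card_gt_0_iff)
  define c where "c = real (card G) + (if J = {} then 0 else 1)"
  have c1: "c \<ge> 1" unfolding c_def using cG by simp
  have valx: "val f n x \<le> 1"
  proof -
    have "x ` {1..n} \<inter> B = {}" unfolding B_def using ximg[of "{1..n}"] by auto presburger
    then show ?thesis unfolding val_def f_def fUB_def by simp
  qed
  have valx0: "val f n x \<ge> 0" unfolding val_def f_def fUB_def by simp
  have valy: "val f n y \<ge> c"
  proof -
    have "B \<subseteq> y ` {1..n}" unfolding B_def G_def y_def by (auto simp: image_def)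
    then have "y ` {1..n} \<inter> B = B" by auto
    moreover have "card B = card G" unfolding B_def by (simp add: card_image inj_on_def)
    moreover have "J \<noteq> {} \<Longrightarrow> y ` {1..n} \<inter> U \<noteq> {}"
    proof -
      assume "J \<noteq> {}"
      then obtain j where j: "j \<in> J" by auto
      then have "y j = 2*j" "2*j \<in> U" unfolding y_def J_def U_def by auto
      then show ?thesis using j unfolding J_def by (metis (no_types, lifting) disjoint_iff imageI mem_Collect_eq)
    qed
    ultimately show ?thesis unfolding val_def f_def fUB_def c_def by auto
  qed
  have "val f n y \<le> opt_val f n X" unfolding opt_val_def
    by (rule Max_ge) (use finprof yP in auto)
  then have opt: "opt_val f n X \<ge> c" using valy by linarith
  have optpos: "opt_val f n X > 0" using opt c1 by simp
  have ratio: "val f n x / opt_val f n X \<le> 1 / c"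
  proof -
    have "val f n x / opt_val f n X \<le> 1 / opt_val f n X"
      using valx optpos by (simp add: divide_right_mono)
    also have "\<dots> \<le> 1 / c" using opt c1 by (simp add: frac_le)
    finally show ?thesis .
  qed
  have greedy: "greedy_outcome f n X P x"
    unfolding greedy_outcome_def
  proof (intro conjI ballI xP)
    fix i z assume i: "i \<in> {1..n}" and z: "z \<in> X i"
    define A where "A = x ` pred_agents n P i"
    have A: "A = (\<lambda>j. 2*j) ` {j\<in>{1..n}. P j < P i}"
      unfolding A_def pred_agents_def by (rule ximg) auto
    have xi: "x i = 2*i" using i unfolding x_def by simp
    show "marg f {z} A \<le> marg f {x i} A"
    proof (cases "P i < p")
      case True
      then show ?thesis using z xi unfolding X_def by simp
    next
      case False
      show ?thesis
      proof (cases "P i = p")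
        case True
        have AU: "A \<inter> U = {}" unfolding A U_def using True by auto
        have "2*i \<notin> A" unfolding A by simp
        moreover have "2*i \<in> U" unfolding U_def using i True by simp
        ultimately have m1: "marg f {x i} A \<ge> 1" using AU xi unfolding f_def marg_fUB[OF finB] by simp
        have "z = 2*i \<or> z = 2*i+1" using z True unfolding X_def by auto
        then show ?thesis
        proof
          assume "z = 2*i" then show ?thesis using xi by simp
        next
          assume zz: "z = 2*i+1"
          have "z \<notin> U" unfolding zz U_def by (rule od_ev_img)
          then have "marg f {z} A \<le> 1" unfolding f_def marg_fUB[OF finB] by simp
          then show ?thesis using m1 by simp
        qed
      next
        case False2: False
        then have gt: "p < P i" using False by simp
        obtain g where g: "g \<in> {1..n}" "P g = p" using p by auto
        have "2*g \<in> A" unfolding A using g gt by simp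
        moreover have "2*g \<in> U" unfolding U_def using g by simp
        ultimately have AU: "A \<inter> U \<noteq> {}" by auto
        have "z \<notin> B"
        proof -
          have "z = 2*i \<or> z = 2*i+1" using z False unfolding X_def by auto
          moreover have "i \<notin> G" unfolding G_def using False2 by simp
          ultimately show ?thesis unfolding B_def by auto presburger
        qed
        then have "marg f {z} A \<le> 0" using AU unfolding f_def marg_fUB[OF finB] by simp
        moreover have "marg f {x i} A \<ge> 0" unfolding f_def by (rule marg_fUB_nonneg[OF finB])
        ultimately show ?thesis by simp
      qed
    qed
  qed
  show ?thesis using finS F dec optpos greedy ratio unfolding c_def by blast
qed


lemma profile_sub:
  assumes "decision_sets n S X" "x \<in> profiles n X"
  shows "x ` {1..n} \<subseteq> S"
  using assms unfolding decision_sets_def profiles_def by (auto simp: PiE_iff)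

lemma ratio_nonneg:
  assumes F: "in_F S f" and dec: "decision_sets n S X" and opt: "opt_val f n X > 0"
    and g: "greedy_outcome f n X P x"
  shows "val f n x / opt_val f n X \<ge> 0"
proof -
  have "x ` {1..n} \<subseteq> S" using profile_sub[OF dec] g unfolding greedy_outcome_def by auto
  then have "val f n x \<ge> 0" using F unfolding in_F_def val_def by auto
  then show ?thesis using opt by simp
qed

lemma gamma_inst_nonneg:
  assumes mono: "\<forall>i\<in>{1..n}. \<forall>j\<in>{1..n}. i < j \<longrightarrow> P i \<le> P j"
    and fin: "finite S" and F: "in_F S f" and dec: "decision_sets n S X" and opt: "opt_val f n X > 0"
  shows "gamma_inst f n X P \<ge> 0"
  unfolding gamma_inst_def
proof (rule cInf_greatest)
  obtain x where "greedy_outcome f n X P x" using greedy_exists[OF mono fin dec] by blast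
  then show "{val f n x / opt_val f n X |x. greedy_outcome f n X P x} \<noteq> {}" by auto
next
  fix v assume "v \<in> {val f n x / opt_val f n X |x. greedy_outcome f n X P x}"
  then show "0 \<le> v" using ratio_nonneg[OF F dec opt] by auto
qed

lemma gamma_inst_le:
  assumes F: "in_F S f" and dec: "decision_sets n S X" and opt: "opt_val f n X > 0"
    and g: "greedy_outcome f n X P x"
  shows "gamma_inst f n X P \<le> val f n x / opt_val f n X"
  unfolding gamma_inst_def
proof (rule cInf_lower)
  show "val f n x / opt_val f n X \<in> {val f n x / opt_val f n X |x. greedy_outcome f n X P x}"
    using g by auto
  show "bdd_below {val f n x / opt_val f n X |x. greedy_outcome f n X P x}"
    unfolding bdd_below_def using ratio_nonneg[OF F dec opt] by auto
qed

lemma gamma_le_inst: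
  assumes mono: "\<forall>i\<in>{1..n}. \<forall>j\<in>{1..n}. i < j \<longrightarrow> P i \<le> P j"
    and fin: "finite S" and F: "in_F S f" and dec: "decision_sets n S X" and opt: "opt_val f n X > 0"
  shows "gamma n P \<le> gamma_inst f n X P"
  unfolding gamma_def
proof (rule cInf_lower)
  show "gamma_inst f n X P \<in> {gamma_inst f n X P |S f X.
       finite S \<and> in_F S f \<and> decision_sets n S X \<and> opt_val f n X > 0}"
    using fin F dec opt by blast
  show "bdd_below {gamma_inst f n X P |S f X.
       finite S \<and> in_F S f \<and> decision_sets n S X \<and> opt_val f n X > 0}"
    unfolding bdd_below_def using gamma_inst_nonneg[OF mono] by blast
qed

lemma gamma_le_group:
  assumes mono: "\<forall>i\<in>{1..n}. \<forall>j\<in>{1..n}. i < j \<longrightarrow> P i \<le> P j"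
    and p: "p \<in> P ` {1..n}"
  shows "gamma n P \<le> 1 / (real (card {i\<in>{1..n}. P i = p}) + (if {i\<in>{1..n}. p < P i} = {} then 0 else 1))"
proof -
  obtain S f X x where inst: "finite S" "in_F S f" "decision_sets n S X" "opt_val f n X > 0"
    "greedy_outcome f n X P x"
    and r: "val f n x / opt_val f n X \<le> 1 / (real (card {i\<in>{1..n}. P i = p}) + (if {i\<in>{1..n}. p < P i} = {} then 0 else 1))"
    using group_instance[OF p] by blast
  have "gamma n P \<le> gamma_inst f n X P" using gamma_le_inst[OF mono inst(1-4)] .
  also have "\<dots> \<le> val f n x / opt_val f n X" using gamma_inst_le[OF inst(2-5)] .
  finally show ?thesis using r by linarith
qed

lemma gamma_ge:
  fixes P :: "nat \<Rightarrow> nat" and D :: nat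
  assumes mono: "\<forall>i\<in>{1..n}. \<forall>j\<in>{1..n}. i < j \<longrightarrow> P i \<le> P j"
    and pos: "\<forall>i\<in>{1..n}. 1 \<le> P i"
    and n1: "1 \<le> n" and D1: "1 \<le> D"
    and Dk: "\<forall>k. 1 \<le> k \<longrightarrow> k < P n \<longrightarrow> card {i\<in>{1..n}. P i = k} + 1 \<le> D"
    and DL: "card {i\<in>{1..n}. P i = P n} \<le> D"
  shows "gamma n P \<ge> 1 / real D"
  unfolding gamma_def
proof (rule cInf_greatest)
  have "P 1 \<in> P ` {1..n}" using n1 by auto
  from group_instance[OF this] obtain S f X x where "finite S" "in_F S f" "decision_sets n S X" "opt_val f n X > 0"
    by blast
  then show "{gamma_inst f n X P |S f X. finite S \<and> in_F S f \<and> decision_sets n S X \<and> 0 < opt_val f n X} \<noteq> {}"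
    by blast
next
  fix v assume "v \<in> {gamma_inst f n X P |S f X. finite S \<and> in_F S f \<and> decision_sets n S X \<and> 0 < opt_val f n X}"
  then obtain S f X where v: "v = gamma_inst f n X P" and inst: "finite S" "in_F S f" "decision_sets n S X" "opt_val f n X > 0"
    by blast
  show "1 / real D \<le> v" unfolding v gamma_inst_def
  proof (rule cInf_greatest)
    obtain x where "greedy_outcome f n X P x" using greedy_exists[OF mono inst(1,3)] by blast
    then show "{val f n x / opt_val f n X |x. greedy_outcome f n X P x} \<noteq> {}" by auto
  next
    fix w assume "w \<in> {val f n x / opt_val f n X |x. greedy_outcome f n X P x}"
    then obtain x where w: "w = val f n x / opt_val f n X" and g: "greedy_outcome f n X P x" by auto
    have "opt_val f n X \<le> real D * val f n x"
      using lower_bound[OF mono pos n1 Dk DL inst(2,1,3) g] .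
    then show "1 / real D \<le> w" unfolding w using inst(4) D1
      by (simp add: divide_simps mult.commute)
  qed
qed


lemma nat_real_if_lt:
  fixes c D :: nat
  assumes "\<not> (real D \<le> real c + (if b then 0 else 1))"
  shows "c + (if b then 0 else 1) < D"
  using assms by (cases b) auto

lemma exists_big_group:
  fixes P :: "nat \<Rightarrow> nat" and D :: nat
  assumes PA: "P \<in> assignments n q" and n1: "1 \<le> n"
    and big: "2 \<le> D \<Longrightarrow> real q * (real D - 2) + 1 < real n"
  shows "\<exists>p\<in>P ` {1..n}. real D \<le> real (card {i\<in>{1..n}. P i = p}) + (if {i\<in>{1..n}. p < P i} = {} then 0 else 1)"
proof (cases "D \<le> 1")
  case True
  have "1 \<in> {i\<in>{1..n}. P i = P 1}" using n1 by auto
  moreover have "finite {i\<in>{1..n}. P i = P 1}" by simp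
  ultimately have "card {i\<in>{1..n}. P i = P 1} > 0" using card_gt_0_iff by blast
  then have "real D \<le> real (card {i\<in>{1..n}. P i = P 1}) + (if {i\<in>{1..n}. P 1 < P i} = {} then 0 else 1)"
    using True by simp
  moreover have "P 1 \<in> P ` {1..n}" using n1 by simp
  ultimately show ?thesis by blast
next
  case False
  then have D2: "2 \<le> D" by simp
  have vals: "\<forall>i\<in>{1..n}. P i \<in> {1..q}" and mono: "\<forall>i\<in>{1..n}. \<forall>j\<in>{1..n}. i < j \<longrightarrow> P i \<le> P j"
    using PA unfolding assignments_def by auto
  define L where "L = P n"
  have Ple: "P i \<le> L" if i: "i \<in> {1..n}" for i
  proof (cases "i = n")
    case True then show ?thesis unfolding L_def by simp
  next
    case False
    then have "i < n" using i by simp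
    then show ?thesis unfolding L_def using mono i n1 by simp
  qed
  have Lq: "L \<in> {1..q}" unfolding L_def using vals n1 by simp
  show ?thesis
  proof (rule ccontr)
    assume nt: "\<not> ?thesis"
    have small: "card {i\<in>{1..n}. P i = p} + (if {i\<in>{1..n}. p < P i} = {} then 0 else 1) < D"
      if pim: "p \<in> P ` {1..n}" for p
    proof -
      have "\<not> (real D \<le> real (card {i\<in>{1..n}. P i = p}) + (if {i\<in>{1..n}. p < P i} = {} then 0 else 1))"
        using nt pim by blast
      then show ?thesis by (rule nat_real_if_lt)
    qed
    have bnd: "real (card {i\<in>{1..n}. P i = p}) \<le> real D - 2 + (if p = L then 1 else 0)" if p: "p \<in> {1..q}" for p
    proof (cases "{i\<in>{1..n}. P i = p} = {}")
      case True
      have "real D - 2 \<ge> 0" using D2 by simp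
      then show ?thesis unfolding True by simp
    next
      case False
      then obtain i0 where i0: "i0 \<in> {1..n}" "P i0 = p" by blast
      then have pim: "p \<in> P ` {1..n}" by blast
      show ?thesis
      proof (cases "p = L")
        case True
        have "card {i\<in>{1..n}. P i = p} < D" using small[OF pim] by linarith
        then have "card {i\<in>{1..n}. P i = p} + 1 \<le> D" by linarith
        then have "real (card {i\<in>{1..n}. P i = p}) + 1 \<le> real D" by linarith
        then show ?thesis using True by simp
      next
        case False
        have "p \<le> L" using Ple[OF i0(1)] i0(2) by simp
        then have "p < L" using False by simp
        then have "n \<in> {i\<in>{1..n}. p < P i}" using n1 unfolding L_def by simp
        then have ne: "{i\<in>{1..n}. p < P i} \<noteq> {}" by blast
        have "card {i\<in>{1..n}. P i = p} + (if {i\<in>{1..n}. p < P i} = {} then 0 else 1) < D"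
          by (rule small[OF pim])
        then have "card {i\<in>{1..n}. P i = p} + 1 < D" unfolding if_not_P[OF ne] .
        then have "card {i\<in>{1..n}. P i = p} + 2 \<le> D" by linarith
        then have "real (card {i\<in>{1..n}. P i = p}) + 2 \<le> real D" by linarith
        then show ?thesis using False by simp
      qed
    qed
    have "real n = real (card {1..n})" by simp
    also have "\<dots> = (\<Sum>i\<in>{1..n}. (1::real))" by simp
    also have "\<dots> = (\<Sum>p\<in>{1..q}. \<Sum>i\<in>{i\<in>{1..n}. P i = p}. (1::real))"
      using vals by (intro sum.group[symmetric]) auto
    also have "\<dots> = (\<Sum>p\<in>{1..q}. real (card {i\<in>{1..n}. P i = p}))" by simp
    also have "\<dots> \<le> (\<Sum>p\<in>{1..q}. real D - 2 + (if p = L then 1 else 0))"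
      using bnd by (intro sum_mono) auto
    also have "\<dots> = real q * (real D - 2) + 1"
      using Lq by (simp add: sum.distrib)
    finally show False using big[OF D2] by simp
  qed
qed

lemma ceil_ge1:
  assumes "1 \<le> m" "1 \<le> i"
  shows "1 \<le> nat \<lceil>real i / real m\<rceil>"
proof -
  have "real i / real m > 0" using assms by simp
  then have "\<lceil>real i / real m\<rceil> \<ge> 1" by (simp add: ceiling_le_iff le_ceiling_iff)
  then have "nat 1 \<le> nat \<lceil>real i / real m\<rceil>" by (rule nat_mono)
  then show ?thesis by simp
qed

lemma ceil_le:
  assumes "1 \<le> m" "i \<le> m * k"
  shows "nat \<lceil>real i / real m\<rceil> \<le> k"
proof -
  have "real i \<le> real m * real k" using assms(2) by (metis of_nat_le_iff of_nat_mult)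
  then have "real i / real m \<le> real k" using assms(1) by (simp add: divide_simps mult.commute)
  then have "\<lceil>real i / real m\<rceil> \<le> int k" by (simp add: ceiling_le_iff)
  then show ?thesis by (subst nat_le_iff) assumption
qed

lemma ceil_mono:
  assumes "i \<le> j"
  shows "nat \<lceil>real i / real m\<rceil> \<le> nat \<lceil>real j / real m\<rceil>"
proof -
  have "real i / real m \<le> real j / real m" using assms by (simp add: divide_right_mono)
  then show ?thesis by (intro nat_mono ceiling_mono)
qed

lemma ceil_card:
  assumes k: "1 \<le> k"
  shows "card {i\<in>A. nat \<lceil>real i / real m\<rceil> = k} \<le> m"
proof (cases "m = 0")
  case True
  then have "{i\<in>A. nat \<lceil>real i / real m\<rceil> = k} = {}" using k by auto
  then show ?thesis by (metis card.empty zero_le)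
next
  case False
  have sub: "{i\<in>A. nat \<lceil>real i / real m\<rceil> = k} \<subseteq> {(k-1)*m<..k*m}"
  proof
    fix i assume "i \<in> {i\<in>A. nat \<lceil>real i / real m\<rceil> = k}"
    then have c: "\<lceil>real i / real m\<rceil> = int k" using k by auto
    then have "real i / real m \<le> real k" by (metis ceiling_le_iff order_refl of_int_of_nat_eq)
    then have "real i \<le> real k * real m" using False by (simp add: divide_simps)
    then have a: "i \<le> k * m" by (metis of_nat_le_iff of_nat_mult)
    have "real k - 1 < real i / real m" using c ceiling_correct[of "real i / real m"] by simp
    then have "(real k - 1) * real m < real i" using False by (simp add: divide_simps)
    then have "real ((k - 1) * m) < real i" using k by (simp add: of_nat_diff)
    then have b: "(k - 1) * m < i" by linarith
    show "i \<in> {(k-1)*m<..k*m}" using a b by simp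
  qed
  have "card {i\<in>A. nat \<lceil>real i / real m\<rceil> = k} \<le> card {(k-1)*m<..k*m}"
    by (rule card_mono[OF _ sub]) simp
  also have "\<dots> = m" using k by (simp add: diff_mult_distrib)
  finally show ?thesis .
qed

lemma mod_eq_case:
  fixes a n q :: nat
  assumes "a * q < n" "n \<le> a * q + q" "n mod q = 1 mod q" "1 \<le> q"
  shows "n = a * q + 1"
proof -
  define d where "d = n - a * q"
  have n: "n = a * q + d" and d1: "1 \<le> d" and dq: "d \<le> q" using assms unfolding d_def by auto
  have "d mod q = 1 mod q" using assms(3) unfolding n by simp
  then have "d = 1"
  proof (cases "d = q")
    case True
    then have "1 mod q = 0" using \<open>d mod q = 1 mod q\<close> by simp
    then have "q = 1" using d1 True by (cases "q = 1") auto
    then show ?thesis using True by simp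
  next
    case False
    then have "d < q" using dq by simp
    then have "d = 1 mod q" using \<open>d mod q = 1 mod q\<close> by simp
    then show ?thesis using d1 by (metis mod_less_eq_dividend le_antisym One_nat_def)
  qed
  then show ?thesis using n by simp
qed


theorem theorem1:
  fixes n q :: nat
  assumes "1 \<le> q" and "q \<le> n"
  defines "r \<equiv> nat \<lceil>real n / real q\<rceil>"
  shows "rho n q = (if n mod q = 1 mod q then 1 / real r else 1 / real (r + 1))
         \<and> Pstar n q \<in> assignments n q
         \<and> gamma n (Pstar n q) = rho n q"
proof -
  have q1: "1 \<le> q" and n1: "1 \<le> n" using assms by auto
  define D where "D = (if n mod q = 1 mod q then r else r + 1)"
  define Ps where "Ps = Pstar n q"
  have tpos: "real n / real q > 0" using q1 n1 by simp
  have cpos: "\<lceil>real n / real q\<rceil> \<ge> 1" using tpos by (simp add: le_ceiling_iff)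
  have rr: "real r = real_of_int \<lceil>real n / real q\<rceil>" unfolding r_def using cpos by simp
  have r1: "r \<ge> 1" unfolding r_def by (rule ceil_ge1[OF q1 n1])
  have rq: "n \<le> r * q"
  proof -
    have "real n / real q \<le> real r" unfolding rr by (rule le_of_int_ceiling)
    then have "real n \<le> real r * real q" using q1 by (simp add: divide_simps)
    then show ?thesis by (metis of_nat_le_iff of_nat_mult)
  qed
  have rq': "(r - 1) * q < n"
  proof -
    have "real r - 1 < real n / real q" unfolding rr using ceiling_correct[of "real n / real q"] by simp
    then have "(real r - 1) * real q < real n" using q1 by (simp add: divide_simps)
    then have "real ((r - 1) * q) < real n" using r1 by (simp add: of_nat_diff)
    then show ?thesis by linarith
  qed
  have D1: "1 \<le> D" unfolding D_def using r1 by simp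
  have rhoexpr: "(if n mod q = 1 mod q then 1 / real r else 1 / real (r + 1)) = 1 / real D"
    unfolding D_def by simp
  have UB: "gamma n P \<le> 1 / real D" if PA: "P \<in> assignments n q" for P
  proof -
    have mono: "\<forall>i\<in>{1..n}. \<forall>j\<in>{1..n}. i < j \<longrightarrow> P i \<le> P j"
      using PA unfolding assignments_def by auto
    have big: "real q * (real D - 2) + 1 < real n" if D2: "2 \<le> D"
    proof (cases "n mod q = 1 mod q")
      case True
      have "n = (r - 1) * q + 1"
        by (rule mod_eq_case[OF rq' _ True q1]) (use rq r1 in \<open>simp add: diff_mult_distrib\<close>)
      then have "real n = (real r - 1) * real q + 1" using r1 by (simp add: of_nat_diff)
      then show ?thesis using True q1 unfolding D_def by (simp add: algebra_simps)
    next
      case False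
      have "n \<noteq> (r - 1) * q + 1"
      proof
        assume "n = (r - 1) * q + 1"
        then have "n mod q = 1 mod q" by (metis add.commute mod_mult_self1)
        then show False using False by simp
      qed
      then have "(r - 1) * q + 1 < n" using rq' by simp
      then have "real ((r - 1) * q) + 1 < real n" by linarith
      then have "(real r - 1) * real q + 1 < real n" using r1 by (simp add: of_nat_diff)
      then show ?thesis using False unfolding D_def by (simp add: algebra_simps)
    qed
    obtain p where p: "p \<in> P ` {1..n}" and
      c: "real D \<le> real (card {i\<in>{1..n}. P i = p}) + (if {i\<in>{1..n}. p < P i} = {} then 0 else 1)"
      using exists_big_group[OF PA n1 big] by blast
    have "gamma n P \<le> 1 / (real (card {i\<in>{1..n}. P i = p}) + (if {i\<in>{1..n}. p < P i} = {} then 0 else 1))"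
      by (rule gamma_le_group[OF mono p])
    also have "\<dots> \<le> 1 / real D" using c D1 by (simp add: frac_le)
    finally show ?thesis .
  qed
  have PA_GE: "Ps \<in> assignments n q \<and> gamma n Ps \<ge> 1 / real D"
  proof (cases "n mod q = 1 mod q")
    case True
    have PsE: "Ps i = (if i < n then nat \<lceil>real i / real (r - 1)\<rceil> else q)" for i
      unfolding Ps_def Pstar_def Let_def r_def[symmetric] using True by simp
    have nA: "n = (r - 1) * q + 1"
      by (rule mod_eq_case[OF rq' _ True q1]) (use rq r1 in \<open>simp add: diff_mult_distrib\<close>)
    have PsN: "Ps n = q" using PsE by simp
    have vals: "Ps i \<in> {1..q}" if i: "i \<in> {1..n}" for i
    proof (cases "i < n")
      case True
      then have "r - 1 \<ge> 1" using nA i by (cases "r - 1") auto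
      then show ?thesis using True i nA PsE[of i] ceil_ge1[of "r - 1" i] ceil_le[of "r - 1" i q] by auto
    next
      case False then show ?thesis using PsE[of i] q1 by simp
    qed
    have mono: "\<forall>i\<in>{1..n}. \<forall>j\<in>{1..n}. i < j \<longrightarrow> Ps i \<le> Ps j"
    proof (intro ballI impI)
      fix i j assume i: "i \<in> {1..n}" and j: "j \<in> {1..n}" and ij: "i < j"
      show "Ps i \<le> Ps j"
      proof (cases "j < n")
        case True
        then show ?thesis using PsE[of i] PsE[of j] ij ceil_mono[of i j] by simp
      next
        case False
        then have "j = n" using j by simp
        then show ?thesis using PsN vals[OF i] by simp
      qed
    qed
    have PA: "Ps \<in> assignments n q" unfolding assignments_def using vals mono by blast
    have pos: "\<forall>i\<in>{1..n}. 1 \<le> Ps i" using vals by auto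
    have sub: "{i\<in>{1..n}. Ps i = k} \<subseteq> insert n {i\<in>{1..n}. nat \<lceil>real i / real (r - 1)\<rceil> = k}" for k
      using PsE by auto
    have Dk: "\<forall>k. 1 \<le> k \<longrightarrow> k < Ps n \<longrightarrow> card {i\<in>{1..n}. Ps i = k} + 1 \<le> D"
    proof (intro allI impI)
      fix k assume k1: "1 \<le> k" and kq: "k < Ps n"
      have "{i\<in>{1..n}. Ps i = k} \<subseteq> {i\<in>{1..n}. nat \<lceil>real i / real (r - 1)\<rceil> = k}"
        using sub[of k] kq PsN by auto
      then have "card {i\<in>{1..n}. Ps i = k} \<le> card {i\<in>{1..n}. nat \<lceil>real i / real (r - 1)\<rceil> = k}"
        by (rule card_mono[rotated]) simp
      also have "\<dots> \<le> r - 1" by (rule ceil_card[OF k1])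
      finally show "card {i\<in>{1..n}. Ps i = k} + 1 \<le> D" unfolding D_def using True r1 by simp
    qed
    have DL: "card {i\<in>{1..n}. Ps i = Ps n} \<le> D"
    proof -
      have "card {i\<in>{1..n}. Ps i = Ps n} \<le> card (insert n {i\<in>{1..n}. nat \<lceil>real i / real (r - 1)\<rceil> = q})"
        using sub[of q] PsN by (intro card_mono) auto
      also have "\<dots> \<le> card {i\<in>{1..n}. nat \<lceil>real i / real (r - 1)\<rceil> = q} + 1"
        by (simp add: card_insert_if)
      also have "\<dots> \<le> r - 1 + 1" using ceil_card[OF q1, of "{1..n}" "r - 1"] by simp
      finally show ?thesis unfolding D_def using True r1 by simp
    qed
    show ?thesis using PA gamma_ge[OF mono pos n1 D1 Dk DL] by simp
  next
    case False
    have PsE: "Ps i = nat \<lceil>real i / real r\<rceil>" for i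
      unfolding Ps_def Pstar_def Let_def r_def[symmetric] using False by simp
    have vals: "Ps i \<in> {1..q}" if i: "i \<in> {1..n}" for i
      using i PsE[of i] ceil_ge1[OF r1, of i] ceil_le[OF r1, of i q] rq by auto
    have mono: "\<forall>i\<in>{1..n}. \<forall>j\<in>{1..n}. i < j \<longrightarrow> Ps i \<le> Ps j"
      using PsE ceil_mono by simp
    have PA: "Ps \<in> assignments n q" unfolding assignments_def using vals mono by blast
    have pos: "\<forall>i\<in>{1..n}. 1 \<le> Ps i" using vals by auto
    have cardk: "card {i\<in>{1..n}. Ps i = k} \<le> r" if "1 \<le> k" for k
      using ceil_card[OF that, of "{1..n}" r] unfolding PsE .
    have Dk: "\<forall>k. 1 \<le> k \<longrightarrow> k < Ps n \<longrightarrow> card {i\<in>{1..n}. Ps i = k} + 1 \<le> D"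
      using cardk False unfolding D_def by auto
    have DL: "card {i\<in>{1..n}. Ps i = Ps n} \<le> D"
      using cardk[of "Ps n"] pos n1 False unfolding D_def by auto
    show ?thesis using PA gamma_ge[OF mono pos n1 D1 Dk DL] by simp
  qed
  have PA: "Ps \<in> assignments n q" and GE: "gamma n Ps \<ge> 1 / real D" using PA_GE by auto
  have geq: "gamma n Ps = 1 / real D" using GE UB[OF PA] by linarith
  have rho: "rho n q = 1 / real D" unfolding rho_def
  proof (rule cSup_eq_maximum)
    show "1 / real D \<in> gamma n ` assignments n q" using geq PA by (metis imageI)
    show "\<And>x. x \<in> gamma n ` assignments n q \<Longrightarrow> x \<le> 1 / real D" using UB by auto
  qed
  show ?thesis using rho rhoexpr PA geq unfolding Ps_def by simp
qed

end
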